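(* For all $n\ge0$ and $m>nt$, \[ \mathcal{L}^{(t)}_H\big(H^{(t)}_m(x)H^{(t)}_n(x)\big)=0 \quad\text{and}\quad \mathcal{L}^{(t)}_H\big(H^{(t)}_{nt}(x)H^{(t)}_n(x)\big)=\Big(\frac{t+1}{2}\Big)^{n}(nt)!. \]
   Context: Fix an integer $t\ge1$. A $t$-path in $K_n$ is a subgraph isomorphic to a path with $t$ edges. $H^{(t)}_n(x)=\sum_F(-1)^{|F|}x^{\,n-(t+1)|F|}$ over all families $F$ of pairwise vertex-disjoint $t$-paths in $K_n$ ($H^{(t)}_0=1$). Let $\mu^{(t)}_n$ be the number of coverings of all vertices of $K_n$ by pairwise vertex-disjoint $t$-paths ($\mu^{(t)}_0=1$), and let $\mathcal{L}^{(t)}_H$ be the linear functional with $\mathcal{L}^{(t)}_H(x^n)=\mu^{(t)}_n$. *)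

theory Defs
  imports Main "HOL-Computational_Algebra.Polynomial"
begin

text \<open>The complete graph K_n has vertex set {0..<n}; an edge is a 2-element set of vertices.
  A t-path is identified with its edge set: the edges {f i, f (i+1)} (i < t) for an
  injective vertex sequence f 0, ..., f t.\<close>

definition tpaths :: "nat \<Rightarrow> nat \<Rightarrow> nat set set set" where
  "tpaths t n = {P. \<exists>f. inj_on f {0..t} \<and> f ` {0..t} \<subseteq> {0..<n}
                      \<and> P = (\<lambda>i. {f i, f (Suc i)}) ` {0..<t}}"

definition pverts :: "nat set set \<Rightarrow> nat set" where
  "pverts P = \<Union>P"

definition disj_families :: "nat \<Rightarrow> nat \<Rightarrow> nat set set set set" where
  "disj_families t n = {F. F \<subseteq> tpaths t n \<and>
      (\<forall>P\<in>F. \<forall>Q\<in>F. P \<noteq> Q \<longrightarrow> pverts P \<inter> pverts Q = {})}"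

definition Hpoly :: "nat \<Rightarrow> nat \<Rightarrow> real poly" where
  "Hpoly t n = (\<Sum>F\<in>disj_families t n. monom ((-1) ^ card F) (n - (t + 1) * card F))"

definition mu :: "nat \<Rightarrow> nat \<Rightarrow> nat" where
  "mu t n = card {F \<in> disj_families t n. (\<Union>P\<in>F. pverts P) = {0..<n}}"

definition LH :: "nat \<Rightarrow> real poly \<Rightarrow> real" where
  "LH t p = (\<Sum>i\<le>degree p. coeff p i * real (mu t i))"

end

theory Submission
  imports Defs "HOL-Combinatorics.Multiset_Permutations"
begin
fun edg :: "nat list \<Rightarrow> nat set set" where
  "edg (x # y # zs) = insert {x, y} (edg (y # zs))"
| "edg _ = {}"

lemma edg_snoc: "xs \<noteq> [] \<Longrightarrow> edg (xs @ [y]) = insert {last xs, y} (edg xs)"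
  by (induction xs rule: edg.induct) (auto simp: insert_commute)

lemma edg_rev: "edg (rev xs) = edg xs"
proof (induction xs)
  case (Cons x xs)
  show ?case
  proof (cases xs)
    case (Cons y ys)
    have "edg (rev (x # xs)) = edg (rev xs @ [x])" by simp
    also have "\<dots> = insert {last (rev xs), x} (edg (rev xs))"
      by (rule edg_snoc) (simp add: Cons)
    also have "\<dots> = insert {x, y} (edg xs)" using Cons.IH by (simp add: Cons last_rev insert_commute)
    finally show ?thesis by (simp add: Cons)
  qed simp
qed simp

lemma Union_edg_sub: "\<Union>(edg xs) \<subseteq> set xs"
  by (induction xs rule: edg.induct) auto

lemma Union_edg: "length xs \<ge> 2 \<Longrightarrow> \<Union>(edg xs) = set xs"
proof (induction xs rule: edg.induct)
  case (1 x y zs)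
  then show ?case by (cases zs) auto
qed auto

lemma edg_nonempty: "length xs \<ge> 2 \<Longrightarrow> edg xs \<noteq> {}"
  by (cases xs rule: edg.cases) auto

lemma edg_empty: "length xs < 2 \<Longrightarrow> edg xs = {}"
  by (cases xs rule: edg.cases) auto

lemma edg_map: "edg (map h xs) = (\<lambda>e. h ` e) ` edg xs"
  by (induction xs rule: edg.induct) auto

lemma path_of_edg:
  "(\<lambda>i. {f i, f (Suc i)}) ` {0..<t} = edg (map f [0..<Suc t])"
proof (induction t)
  case 0 then show ?case by simp
next
  case (Suc t)
  have "map f [0..<Suc (Suc t)] = map f [0..<Suc t] @ [f (Suc t)]" by simp
  then have "edg (map f [0..<Suc (Suc t)]) = insert {f t, f (Suc t)} (edg (map f [0..<Suc t]))"
    by (simp add: edg_snoc last_map del: upt_Suc)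
  moreover have "{0..<Suc t} = insert t {0..<t}" by auto
  ultimately show ?case using Suc by simp
qed

lemma tpaths_eq: "tpaths t n = {edg xs | xs. distinct xs \<and> length xs = Suc t \<and> set xs \<subseteq> {0..<n}}"
proof (intro set_eqI iffI)
  fix P assume "P \<in> tpaths t n"
  then obtain f where f: "inj_on f {0..t}" "f ` {0..t} \<subseteq> {0..<n}"
    "P = (\<lambda>i. {f i, f (Suc i)}) ` {0..<t}" unfolding tpaths_def by auto
  have "{0..t} = set [0..<Suc t]" by auto
  then show "P \<in> {edg xs | xs. distinct xs \<and> length xs = Suc t \<and> set xs \<subseteq> {0..<n}}"
    using f by (intro CollectI exI[of _ "map f [0..<Suc t]"]) (auto simp: path_of_edg distinct_map)
next
  fix P assume "P \<in> {edg xs | xs. distinct xs \<and> length xs = Suc t \<and> set xs \<subseteq> {0..<n}}"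
  then obtain xs where xs: "distinct xs" "length xs = Suc t" "set xs \<subseteq> {0..<n}" "P = edg xs" by auto
  have m: "map ((!) xs) [0..<Suc t] = xs" using xs(2) by (metis map_nth)
  have i: "inj_on ((!) xs) {0..t}" using xs(1,2)
    by (auto simp: inj_on_def nth_eq_iff_index_eq)
  have "(!) xs ` {0..t} = set xs" using xs(2)
    by (auto simp: set_conv_nth image_def)
  then show "P \<in> tpaths t n" unfolding tpaths_def using xs i
    by (intro CollectI exI[of _ "(!) xs"]) (simp add: path_of_edg m del: upt_Suc)
qed

definition TP :: "nat \<Rightarrow> nat set set set" where
  "TP t = {edg xs | xs. distinct xs \<and> length xs = Suc t}"
definition pw :: "nat set set set \<Rightarrow> bool" where
  "pw F = (\<forall>P\<in>F. \<forall>Q\<in>F. P \<noteq> Q \<longrightarrow> pverts P \<inter> pverts Q = {})"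
definition DF :: "nat \<Rightarrow> nat set \<Rightarrow> nat set set set set" where
  "DF t V = {F. F \<subseteq> TP t \<and> (\<forall>P\<in>F. pverts P \<subseteq> V) \<and> pw F}"
definition COV :: "nat \<Rightarrow> nat set \<Rightarrow> nat set set set set" where
  "COV t V = {F \<in> DF t V. (\<Union>P\<in>F. pverts P) = V}"
definition imgP :: "(nat \<Rightarrow> nat) \<Rightarrow> nat set set \<Rightarrow> nat set set" where
  "imgP h P = (\<lambda>e. h ` e) ` P"
definition imgF :: "(nat \<Rightarrow> nat) \<Rightarrow> nat set set set \<Rightarrow> nat set set set" where
  "imgF h F = imgP h ` F"

lemma pverts_imgP: "pverts (imgP h P) = h ` pverts P"
  by (auto simp: pverts_def imgP_def)

lemma img_id: "(\<And>x. x \<in> A \<Longrightarrow> f x = x) \<Longrightarrow> f ` A = A"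
  by force

lemma imgP_cancel: "(\<forall>x\<in>pverts P. k (j x) = x) \<Longrightarrow> imgP k (imgP j P) = P"
  unfolding imgP_def pverts_def image_image
  by (rule img_id) (auto simp: image_comp intro!: img_id)

lemma imgF_cancel: "(\<forall>P\<in>F. \<forall>x\<in>pverts P. k (j x) = x) \<Longrightarrow> imgF k (imgF j F) = F"
  unfolding imgF_def image_image by (rule img_id) (simp add: imgP_cancel)

context fixes t :: nat assumes t: "t \<ge> 1" begin

lemma TP_pverts: "P \<in> TP t \<Longrightarrow> \<exists>xs. P = edg xs \<and> distinct xs \<and> length xs = Suc t \<and> pverts P = set xs"
  using t unfolding TP_def pverts_def by (auto simp: Union_edg)

lemma TP_card: "P \<in> TP t \<Longrightarrow> finite (pverts P) \<and> card (pverts P) = Suc t"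
  using TP_pverts by (metis distinct_card finite_set)

lemma TP_ne: "P \<in> TP t \<Longrightarrow> pverts P \<noteq> {}"
  using TP_card by fastforce

lemma tpaths_TP: "tpaths t n = {P \<in> TP t. pverts P \<subseteq> {0..<n}}"
  using t Union_edg_sub unfolding tpaths_eq TP_def pverts_def by (fastforce simp: Union_edg)

lemma disj_families_DF: "disj_families t n = DF t {0..<n}"
  unfolding disj_families_def DF_def tpaths_TP pw_def by auto

lemma mu_COV: "mu t n = card (COV t {0..<n})"
  unfolding mu_def COV_def disj_families_DF ..

lemma finite_DF: "finite V \<Longrightarrow> finite (DF t V)"
proof -
  assume V: "finite V"
  have "DF t V \<subseteq> Pow (Pow (Pow V))" unfolding DF_def pverts_def by auto
  then show ?thesis using V by (meson finite_Pow_iff finite_subset)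
qed

lemma finite_COV: "finite V \<Longrightarrow> finite (COV t V)"
  unfolding COV_def using finite_DF by simp

lemma imgP_TP: "P \<in> TP t \<Longrightarrow> inj_on h (pverts P) \<Longrightarrow> imgP h P \<in> TP t"
proof -
  assume P: "P \<in> TP t" and h: "inj_on h (pverts P)"
  obtain xs where xs: "P = edg xs" "distinct xs" "length xs = Suc t" "pverts P = set xs"
    using TP_pverts[OF P] by blast
  have "imgP h P = edg (map h xs)" by (simp add: imgP_def edg_map xs)
  then show ?thesis unfolding TP_def using xs h by (auto simp: distinct_map)
qed

lemma DF_img: assumes h: "inj_on h V" and F: "F \<in> DF t V" shows "imgF h F \<in> DF t (h ` V)"
proof -
  have a: "imgP h P \<in> TP t" if "P \<in> F" for P
    using F that by (intro imgP_TP) (auto simp: DF_def intro: inj_on_subset[OF h])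
  have b: "pverts Q \<subseteq> h ` V" if Q: "Q \<in> imgF h F" for Q
  proof -
    obtain P where "P \<in> F" "Q = imgP h P" using Q by (auto simp: imgF_def)
    then show ?thesis using F by (auto simp: pverts_imgP DF_def intro!: image_mono)
  qed
  have c: "pverts (imgP h P) \<inter> pverts (imgP h Q) = {}" if "P \<in> F" "Q \<in> F" "imgP h P \<noteq> imgP h Q" for P Q
  proof -
    have "P \<noteq> Q" using that by auto
    then have d: "pverts P \<inter> pverts Q = {}" using F that by (auto simp: DF_def pw_def)
    have "pverts P \<subseteq> V" "pverts Q \<subseteq> V" using F that by (auto simp: DF_def)
    then have "h ` pverts P \<inter> h ` pverts Q = {}" using d h
      unfolding inj_on_def by blast
    then show ?thesis by (simp add: pverts_imgP)
  qed
  show ?thesis using a b c unfolding DF_def pw_def imgF_def by blast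
qed

lemma DF_relabel:
  assumes h: "inj_on h V"
  shows "bij_betw (imgF h) (DF t V) (DF t (h ` V))"
proof -
  let ?g = "inv_into V h"
  have g: "inj_on ?g (h ` V)" "?g ` h ` V = V" using h by (auto simp: inj_on_inv_into)
  show ?thesis
  proof (rule bij_betw_byWitness[where f' = "imgF ?g"])
    show "\<forall>F\<in>DF t V. imgF ?g (imgF h F) = F"
    proof (intro ballI imgF_cancel)
      fix F P x assume "F \<in> DF t V" "P \<in> F" "x \<in> pverts P"
      then have "x \<in> V" by (auto simp: DF_def)
      then show "?g (h x) = x" using h by (rule inv_into_f_f[rotated])
    qed
    show "\<forall>F\<in>DF t (h ` V). imgF h (imgF ?g F) = F"
    proof (intro ballI imgF_cancel)
      fix F P x assume "F \<in> DF t (h ` V)" "P \<in> F" "x \<in> pverts P"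
      then have "x \<in> h ` V" by (auto simp: DF_def)
      then show "h (?g x) = x" by (rule f_inv_into_f)
    qed
    show "imgF h ` DF t V \<subseteq> DF t (h ` V)" using DF_img[OF h] by auto
    show "imgF ?g ` DF t (h ` V) \<subseteq> DF t V" using DF_img[OF g(1)] g(2) by auto
  qed
qed

lemma card_imgF:
  assumes h: "inj_on h V" and F: "F \<in> DF t V" shows "card (imgF h F) = card F"
proof -
  have "inj_on (imgP h) F"
  proof (rule inj_on_inverseI)
    fix P assume "P \<in> F"
    then show "imgP (inv_into V h) (imgP h P) = P"
      using h F by (intro imgP_cancel) (auto simp: DF_def inv_into_f_f subsetD)
  qed
  then show ?thesis unfolding imgF_def by (rule card_image)
qed

lemma COV_relabel:
  assumes h: "inj_on h V"
  shows "bij_betw (imgF h) (COV t V) (COV t (h ` V))"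
proof -
  have u: "(\<Union>P\<in>imgF k F. pverts P) = k ` (\<Union>P\<in>F. pverts P)" for F k
    by (auto simp: imgF_def pverts_imgP)
  let ?g = "inv_into V h"
  have g: "inj_on ?g (h ` V)" "?g ` h ` V = V" using h by (auto simp: inj_on_inv_into)
  have u2: "(\<Union>P\<in>imgF ?g F. pverts P) = V" if "(\<Union>P\<in>F. pverts P) = h ` V" for F
    using u[of ?g F] that g(2) by simp
  show ?thesis
  proof (rule bij_betw_byWitness[where f' = "imgF ?g"])
    show "\<forall>F\<in>COV t V. imgF ?g (imgF h F) = F"
    proof (intro ballI imgF_cancel)
      fix F P x assume "F \<in> COV t V" "P \<in> F" "x \<in> pverts P"
      then have "x \<in> V" by (auto simp: DF_def COV_def)
      then show "?g (h x) = x" using h by (rule inv_into_f_f[rotated])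
    qed
    show "\<forall>F\<in>COV t (h ` V). imgF h (imgF ?g F) = F"
    proof (intro ballI imgF_cancel)
      fix F P x assume "F \<in> COV t (h ` V)" "P \<in> F" "x \<in> pverts P"
      then have "x \<in> h ` V" by (auto simp: DF_def COV_def)
      then show "h (?g x) = x" by (rule f_inv_into_f)
    qed
    show "imgF h ` COV t V \<subseteq> COV t (h ` V)"
    proof
      fix F' assume "F' \<in> imgF h ` COV t V"
      then obtain F where F: "F \<in> COV t V" "F' = imgF h F" by auto
      then show "F' \<in> COV t (h ` V)" using DF_img[OF h, of F] u[of h F] unfolding COV_def by auto
    qed
    show "imgF ?g ` COV t (h ` V) \<subseteq> COV t V"
    proof
      fix F' assume "F' \<in> imgF ?g ` COV t (h ` V)"
      then obtain F where F: "F \<in> COV t (h ` V)" "F' = imgF ?g F" by auto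
      then show "F' \<in> COV t V" using DF_img[OF g(1), of F] g(2) u2[of F] unfolding COV_def by auto
    qed
  qed
qed

lemma mu_card: "finite W \<Longrightarrow> mu t (card W) = card (COV t W)"
proof -
  assume "finite W"
  then obtain h where h: "bij_betw h {0..<card W} W" using ex_bij_betw_nat_finite by blast
  then have "bij_betw (imgF h) (COV t {0..<card W}) (COV t W)"
    using COV_relabel[OF bij_betw_imp_inj_on[OF h]] by (simp add: bij_betw_def)
  then show ?thesis by (simp add: mu_COV bij_betw_same_card)
qed

lemma card_UN_pverts:
  assumes "F \<in> DF t V" "finite V"
  shows "card (\<Union>P\<in>F. pverts P) = Suc t * card F"
proof -
  have "F \<subseteq> Pow (Pow V)" using assms unfolding DF_def pverts_def by auto
  then have fin: "finite F" using assms(2) by (meson finite_Pow_iff finite_subset)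
  have "card (\<Union>P\<in>F. pverts P) = (\<Sum>P\<in>F. card (pverts P))"
    using assms fin by (intro card_UN_disjoint) (auto simp: DF_def pw_def dest: TP_card)
  also have "\<dots> = (\<Sum>P\<in>F. Suc t)" using assms by (intro sum.cong) (auto simp: DF_def dest: TP_card)
  finally show ?thesis by simp
qed

end

definition VV :: "nat set set set \<Rightarrow> nat set" where
  "VV F = (\<Union>P\<in>F. pverts P)"

lemma alt_sum_Pow:
  assumes "finite S"
  shows "(\<Sum>F\<in>Pow S. (-1::real) ^ card F) = (if S = {} then 1 else 0)"
  using assms
proof (induction S rule: finite_induct)
  case (insert x S)
  have d: "Pow S \<inter> insert x ` Pow S = {}" using insert by auto
  have inj: "inj_on (insert x) (Pow S)" using insert
    by (simp add: inj_on_def) (metis Pow_iff insert_absorb insert_ident subsetD)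
  have "(\<Sum>F\<in>Pow (insert x S). (-1::real) ^ card F)
      = (\<Sum>F\<in>Pow S. (-1::real) ^ card F) + (\<Sum>F\<in>insert x ` Pow S. (-1::real) ^ card F)"
    unfolding Pow_insert using insert d by (intro sum.union_disjoint) auto
  also have "(\<Sum>F\<in>insert x ` Pow S. (-1::real) ^ card F) = (\<Sum>F\<in>Pow S. (-1::real) ^ card (insert x F))"
    using inj by (simp add: sum.reindex)
  also have "\<dots> = (\<Sum>F\<in>Pow S. - ((-1::real) ^ card F))"
    using insert by (intro sum.cong refl) (auto simp: card_insert_if finite_subset)
  finally show ?case by (simp add: sum_negf)
qed simp

lemma pw_subset: "pw K \<Longrightarrow> F \<subseteq> K \<Longrightarrow> pw F"
  unfolding pw_def by blast

lemma pwD: "pw F \<Longrightarrow> P \<in> F \<Longrightarrow> Q \<in> F \<Longrightarrow> P \<noteq> Q \<Longrightarrow> pverts P \<inter> pverts Q = {}"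
  unfolding pw_def by blast

context fixes t :: nat assumes t: "t \<ge> 1" begin

lemma DF_fin_elem: "F \<in> DF t V \<Longrightarrow> finite V \<Longrightarrow> finite F"
proof -
  assume a: "F \<in> DF t V" "finite V"
  have "F \<subseteq> Pow (Pow V)" using a unfolding DF_def pverts_def by auto
  then show ?thesis using a(2) by (meson finite_Pow_iff finite_subset)
qed

lemma j_in:
  assumes AB: "A \<inter> B = {}" and F: "F \<in> DF t A" and G: "G \<in> DF t B"
    and C: "C \<in> COV t (A \<union> B - VV F - VV G)"
  shows "F \<union> G \<union> C \<in> COV t (A \<union> B)" "(F \<union> G \<union> C) - F - G = C"
proof -
  have F1: "F \<subseteq> TP t" "\<And>P. P \<in> F \<Longrightarrow> pverts P \<subseteq> A" "pw F" using F by (auto simp: DF_def)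
  have G1: "G \<subseteq> TP t" "\<And>P. P \<in> G \<Longrightarrow> pverts P \<subseteq> B" "pw G" using G by (auto simp: DF_def)
  have C1: "C \<subseteq> TP t" "\<And>P. P \<in> C \<Longrightarrow> pverts P \<subseteq> A \<union> B - VV F - VV G" "pw C"
    "VV C = A \<union> B - VV F - VV G" using C by (auto simp: DF_def COV_def VV_def)
  have vf: "\<And>P. P \<in> F \<Longrightarrow> pverts P \<subseteq> VV F" "\<And>P. P \<in> G \<Longrightarrow> pverts P \<subseteq> VV G"
    by (auto simp: VV_def)
  have FA: "VV F \<subseteq> A" "VV G \<subseteq> B" using F1(2) G1(2) by (auto simp: VV_def)
  have pwK: "pw (F \<union> G \<union> C)"
    unfolding pw_def
  proof (intro ballI impI)
    fix P Q assume P: "P \<in> F \<union> G \<union> C" and Q: "Q \<in> F \<union> G \<union> C" and PQ: "P \<noteq> Q"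
    have dis: "pverts P \<inter> pverts Q = {}" if "P \<in> F \<and> Q \<in> G \<or> P \<in> F \<and> Q \<in> C \<or> P \<in> G \<and> Q \<in> C" for P Q
    proof -
      { assume "P \<in> F" "Q \<in> G" then have ?thesis using F1(2)[of P] G1(2)[of Q] AB by blast }
      moreover { assume "P \<in> F" "Q \<in> C" then have ?thesis using vf(1)[of P] C1(2)[of Q] by blast }
      moreover { assume "P \<in> G" "Q \<in> C" then have ?thesis using vf(2)[of P] C1(2)[of Q] by blast }
      ultimately show ?thesis using that by blast
    qed
    have "P \<in> F \<and> Q \<in> F \<or> P \<in> G \<and> Q \<in> G \<or> P \<in> C \<and> Q \<in> C \<or>
      (P \<in> F \<and> Q \<in> G \<or> P \<in> F \<and> Q \<in> C \<or> P \<in> G \<and> Q \<in> C) \<or>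
      (Q \<in> F \<and> P \<in> G \<or> Q \<in> F \<and> P \<in> C \<or> Q \<in> G \<and> P \<in> C)" using P Q by blast
    then show "pverts P \<inter> pverts Q = {}"
    proof (elim disjE conjE)
      assume "P \<in> F" "Q \<in> F" then show ?thesis using pwD[OF F1(3)] PQ by blast
    next
      assume "P \<in> G" "Q \<in> G" then show ?thesis using pwD[OF G1(3)] PQ by blast
    next
      assume "P \<in> C" "Q \<in> C" then show ?thesis using pwD[OF C1(3)] PQ by blast
    qed (use dis[of P Q] dis[of Q P] in \<open>auto simp: Int_commute\<close>)
  qed
  have "VV (F \<union> G \<union> C) = A \<union> B" using C1(4) FA by (auto simp: VV_def)
  moreover have "\<forall>P\<in>F \<union> G \<union> C. pverts P \<subseteq> A \<union> B" using F1(2) G1(2) C1(2) by blast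
  moreover have "F \<union> G \<union> C \<subseteq> TP t" using F1(1) G1(1) C1(1) by blast
  ultimately show "F \<union> G \<union> C \<in> COV t (A \<union> B)"
    using pwK unfolding COV_def DF_def VV_def[symmetric] by simp
  have "C \<inter> F = {}" "C \<inter> G = {}"
    using C1(1,2) vf TP_ne[OF t] by blast+
  then show "(F \<union> G \<union> C) - F - G = C" by blast
qed

lemma i_in:
  assumes K: "K \<in> COV t (A \<union> B)" and F: "F \<subseteq> {P \<in> K. pverts P \<subseteq> A}" and G: "G \<subseteq> {P \<in> K. pverts P \<subseteq> B}"
  shows "F \<in> DF t A" "G \<in> DF t B" "K - F - G \<in> COV t (A \<union> B - VV F - VV G)"
proof -
  have K1: "K \<subseteq> TP t" "\<And>P. P \<in> K \<Longrightarrow> pverts P \<subseteq> A \<union> B" "pw K" "VV K = A \<union> B"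
    using K by (auto simp: COV_def DF_def VV_def)
  have FK: "F \<subseteq> K" "G \<subseteq> K" using F G by auto
  show "F \<in> DF t A" unfolding DF_def mem_Collect_eq
    using FK K1(1) F pw_subset[OF K1(3) FK(1)] by blast
  show "G \<in> DF t B" unfolding DF_def mem_Collect_eq
    using FK K1(1) G pw_subset[OF K1(3) FK(2)] by blast
  have sub: "pverts P \<subseteq> A \<union> B - VV F - VV G" if P: "P \<in> K - F - G" for P
  proof -
    have d: "pverts P \<inter> pverts Q = {}" if "Q \<in> F \<union> G" for Q
    proof (rule pwD[OF K1(3)])
      show "P \<in> K" using P by blast
      show "Q \<in> K" using that FK by blast
      show "P \<noteq> Q" using that P by blast
    qed
    have "pverts P \<inter> VV F = {}" "pverts P \<inter> VV G = {}"
      unfolding VV_def using d by blast+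
    then show ?thesis using K1(2)[of P] P by blast
  qed
  have "VV (K - F - G) = A \<union> B - VV F - VV G"
  proof
    show "VV (K - F - G) \<subseteq> A \<union> B - VV F - VV G" 
    proof -
      have "pverts P \<subseteq> A \<union> B - VV F - VV G" if "P \<in> K - F - G" for P using sub that .
      then show ?thesis unfolding VV_def[of "K - F - G"] by (rule UN_least)
    qed
    show "A \<union> B - VV F - VV G \<subseteq> VV (K - F - G)"
    proof
      fix x assume x: "x \<in> A \<union> B - VV F - VV G"
      then have "x \<in> VV K" using K1(4) by blast
      then obtain P where P: "P \<in> K" "x \<in> pverts P" unfolding VV_def by blast
      have "P \<notin> F" "P \<notin> G" using x P(2) unfolding VV_def by blast+
      then show "x \<in> VV (K - F - G)" using P unfolding VV_def by blast
    qed
  qed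
  moreover have "pw (K - F - G)" by (rule pw_subset[OF K1(3)]) blast
  moreover have "K - F - G \<subseteq> TP t" using K1(1) by blast
  ultimately show "K - F - G \<in> COV t (A \<union> B - VV F - VV G)"
    using sub unfolding COV_def DF_def VV_def[symmetric] by simp
qed

lemma main_identity:
  assumes AB: "A \<inter> B = {}" "finite A" "finite B"
  shows "(\<Sum>F\<in>DF t A. \<Sum>G\<in>DF t B. (-1::real) ^ (card F + card G) * real (card (COV t (A \<union> B - VV F - VV G))))
       = real (card {K \<in> COV t (A \<union> B). \<forall>P\<in>K. \<not> pverts P \<subseteq> A \<and> \<not> pverts P \<subseteq> B})"
proof -
  define w :: "nat set set set \<Rightarrow> nat set set set \<Rightarrow> real" where "w F G = (-1::real) ^ (card F + card G)" for F G
  define R where "R F G = A \<union> B - VV F - VV G" for F G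
  define KA where "KA K = {P \<in> K. pverts P \<subseteq> A}" for K :: "nat set set set"
  define KB where "KB K = {P \<in> K. pverts P \<subseteq> B}" for K :: "nat set set set"
  define D1 where "D1 = (SIGMA F:DF t A. SIGMA G:DF t B. COV t (R F G))"
  define D2 where "D2 = (SIGMA K:COV t (A \<union> B). SIGMA F:Pow (KA K). Pow (KB K))"
  have finAB: "finite (A \<union> B)" using AB by simp
  have "(\<Sum>F\<in>DF t A. \<Sum>G\<in>DF t B. (-1::real) ^ (card F + card G) * real (card (COV t (A \<union> B - VV F - VV G))))
      = (\<Sum>F\<in>DF t A. \<Sum>G\<in>DF t B. \<Sum>C\<in>COV t (R F G). w F G)"
    by (simp add: w_def R_def mult.commute)
  also have "\<dots> = (\<Sum>F\<in>DF t A. \<Sum>(G, C)\<in>(SIGMA G:DF t B. COV t (R F G)). w F G)"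
    using finite_DF[OF t] finite_COV[OF t] AB
    by (intro sum.cong refl sum.Sigma) (auto simp: R_def)
  also have "\<dots> = (\<Sum>(F, G, C)\<in>D1. w F G)"
    unfolding D1_def using finite_DF[OF t] finite_COV[OF t] AB
    by (subst sum.Sigma) (auto simp: R_def intro!: finite_SigmaI)
  also have "\<dots> = (\<Sum>(K, F, G)\<in>D2. (-1::real) ^ card F * (-1) ^ card G)"
  proof (rule sum.reindex_bij_witness[where i = "\<lambda>(K, F, G). (F, G, K - F - G)" and j = "\<lambda>(F, G, C). (F \<union> G \<union> C, F, G)"])
    fix a assume a: "a \<in> D1"
    then obtain F G C where e: "a = (F, G, C)" "F \<in> DF t A" "G \<in> DF t B" "C \<in> COV t (R F G)"
      unfolding D1_def by auto
    note jj = j_in[OF AB(1) e(2,3) e(4)[unfolded R_def]]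
    show "(case case a of (F, G, C) \<Rightarrow> (F \<union> G \<union> C, F, G) of (K, F, G) \<Rightarrow> (F, G, K - F - G)) = a"
      using jj(2) e(1) by simp
    show "(case a of (F, G, C) \<Rightarrow> (F \<union> G \<union> C, F, G)) \<in> D2"
    proof -
      have "F \<subseteq> KA (F \<union> G \<union> C)" "G \<subseteq> KB (F \<union> G \<union> C)"
        using e(2,3) by (auto simp: KA_def KB_def DF_def)
      then show ?thesis using jj(1) e(1) by (simp add: D2_def)
    qed
    show "(case case a of (F, G, C) \<Rightarrow> (F \<union> G \<union> C, F, G) of (K, F, G) \<Rightarrow> (-1::real) ^ card F * (- 1) ^ card G)
       = (case a of (F, G, C) \<Rightarrow> w F G)"
      using e(1) by (simp add: w_def power_add)
  next
    fix b assume b: "b \<in> D2"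
    then obtain K F G where e: "b = (K, F, G)" "K \<in> COV t (A \<union> B)" "F \<subseteq> KA K" "G \<subseteq> KB K"
      unfolding D2_def by auto
    note ii = i_in[OF e(2) e(3)[unfolded KA_def] e(4)[unfolded KB_def]]
    show "(case case b of (K, F, G) \<Rightarrow> (F, G, K - F - G) of (F, G, C) \<Rightarrow> (F \<union> G \<union> C, F, G)) = b"
    proof -
      have "F \<subseteq> K" "G \<subseteq> K" using e(3,4) by (auto simp: KA_def KB_def)
      then show ?thesis using e(1) by auto
    qed
    show "(case b of (K, F, G) \<Rightarrow> (F, G, K - F - G)) \<in> D1"
      using ii e(1) by (simp add: D1_def R_def)
  qed
  also have "\<dots> = (\<Sum>K\<in>COV t (A \<union> B). \<Sum>(F, G)\<in>Pow (KA K) \<times> Pow (KB K). (-1::real) ^ card F * (-1) ^ card G)"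
    unfolding D2_def using finite_COV[OF t finAB] DF_fin_elem[OF _ finAB]
    by (subst sum.Sigma) (auto simp: COV_def KA_def KB_def)
  also have "\<dots> = (\<Sum>K\<in>COV t (A \<union> B). (\<Sum>F\<in>Pow (KA K). (-1::real) ^ card F) * (\<Sum>G\<in>Pow (KB K). (-1::real) ^ card G))"
    by (simp add: sum_product sum.cartesian_product)
  also have "\<dots> = (\<Sum>K\<in>COV t (A \<union> B). if KA K = {} \<and> KB K = {} then 1 else 0)"
    using DF_fin_elem[OF _ finAB]
    by (intro sum.cong refl) (auto simp: alt_sum_Pow KA_def KB_def COV_def)
  also have "\<dots> = real (card {K \<in> COV t (A \<union> B). \<forall>P\<in>K. \<not> pverts P \<subseteq> A \<and> \<not> pverts P \<subseteq> B})"
  proof -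
    have "(KA K = {} \<and> KB K = {}) = (\<forall>P\<in>K. \<not> pverts P \<subseteq> A \<and> \<not> pverts P \<subseteq> B)" for K
      by (auto simp: KA_def KB_def)
    then show ?thesis using finite_COV[OF t finAB]
      by (simp add: sum.inter_filter[symmetric])
  qed
  finally show ?thesis .
qed

end

lemma LH_bound: "degree p \<le> N \<Longrightarrow> LH t p = (\<Sum>i\<le>N. coeff p i * real (mu t i))"
  unfolding LH_def
  by (rule sum.mono_neutral_left) (auto simp: coeff_eq_0)

lemma LH_add: "LH t (p + q) = LH t p + LH t q"
proof -
  define N where "N = max (degree p) (degree q)"
  have "degree (p + q) \<le> N" unfolding N_def by (rule degree_add_le) auto
  then have "LH t (p + q) = (\<Sum>i\<le>N. coeff (p + q) i * real (mu t i))" by (rule LH_bound)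
  also have "\<dots> = (\<Sum>i\<le>N. coeff p i * real (mu t i)) + (\<Sum>i\<le>N. coeff q i * real (mu t i))"
    by (simp add: sum.distrib algebra_simps)
  also have "\<dots> = LH t p + LH t q"
    by (subst (1 2) LH_bound[of _ N]) (auto simp: N_def)
  finally show ?thesis .
qed

lemma LH_0: "LH t 0 = 0" by (simp add: LH_def)

lemma LH_sum: "finite S \<Longrightarrow> LH t (\<Sum>x\<in>S. f x) = (\<Sum>x\<in>S. LH t (f x))"
  by (induction S rule: finite_induct) (simp_all add: LH_0 LH_add)

lemma LH_monom: "LH t (monom c k) = c * real (mu t k)"
proof -
  have "LH t (monom c k) = (\<Sum>i\<le>k. coeff (monom c k) i * real (mu t i))"
    by (rule LH_bound) (simp add: degree_monom_le)
  also have "\<dots> = (\<Sum>i\<le>k. if i = k then c * real (mu t k) else 0)"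
    by (intro sum.cong refl) (auto simp: coeff_monom)
  also have "\<dots> = c * real (mu t k)" by (simp add: sum.delta)
  finally show ?thesis .
qed

context fixes t :: nat assumes t: "t \<ge> 1" begin

lemma LH_expand:
  "LH t (Hpoly t m * Hpoly t n) =
   (\<Sum>F\<in>DF t {0..<m}. \<Sum>G\<in>DF t {0..<n}. (-1::real) ^ (card F + card G) * real (mu t (m - Suc t * card F + (n - Suc t * card G))))"
proof -
  have "Hpoly t m * Hpoly t n = (\<Sum>F\<in>DF t {0..<m}. \<Sum>G\<in>DF t {0..<n}.
      monom ((-1) ^ card F * (-1) ^ card G) (m - (t + 1) * card F + (n - (t + 1) * card G)))"
    unfolding Hpoly_def disj_families_DF[OF t] sum_product by (simp add: mult_monom)
  then show ?thesis
    using finite_DF[OF t]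
    by (simp add: LH_sum LH_monom power_add)
qed

lemma LH_comb:
  "LH t (Hpoly t m * Hpoly t n) =
   real (card {K \<in> COV t ({0..<m} \<union> {m..<m+n}). \<forall>P\<in>K. \<not> pverts P \<subseteq> {0..<m} \<and> \<not> pverts P \<subseteq> {m..<m+n}})"
proof -
  define A where "A = {0..<m::nat}"
  define B where "B = {m..<m+n}"
  define h where "h = (\<lambda>x::nat. m + x)"
  have hinj: "inj_on h {0..<n}" by (simp add: h_def inj_on_def)
  have hB: "h ` {0..<n} = B" unfolding h_def B_def
    by (auto simp: image_iff intro!: bexI[where x = "_ - m"])
  have AB: "A \<inter> B = {}" "finite A" "finite B" by (auto simp: A_def B_def)
  have bij: "bij_betw (imgF h) (DF t {0..<n}) (DF t B)"
    using DF_relabel[OF t hinj] hB by simp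
  define \<psi> where "\<psi> F G = (-1::real) ^ (card F + card G) * real (card (COV t (A \<union> B - VV F - VV G)))" for F G
  have inner: "(\<Sum>G\<in>DF t {0..<n}. (-1::real) ^ (card F + card G) * real (mu t (m - Suc t * card F + (n - Suc t * card G))))
      = (\<Sum>G\<in>DF t B. \<psi> F G)" if F: "F \<in> DF t A" for F
  proof -
    have "(\<Sum>G\<in>DF t B. \<psi> F G) = (\<Sum>G\<in>DF t {0..<n}. \<psi> F (imgF h G))"
      using bij by (simp add: sum.reindex_bij_betw)
    also have "\<dots> = (\<Sum>G\<in>DF t {0..<n}. (-1::real) ^ (card F + card G) * real (mu t (m - Suc t * card F + (n - Suc t * card G))))"
    proof (intro sum.cong refl)
      fix G assume G: "G \<in> DF t {0..<n}"
      have G': "imgF h G \<in> DF t B" using bij G by (auto simp: bij_betw_def)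
      have cG: "card (imgF h G) = card G" using card_imgF[OF t hinj G] .
      have s1: "VV F \<subseteq> A" "VV (imgF h G) \<subseteq> B" using F G' by (auto simp: VV_def DF_def)
      have e: "A \<union> B - VV F - VV (imgF h G) = (A - VV F) \<union> (B - VV (imgF h G))" using AB s1 by blast
      have "card (A \<union> B - VV F - VV (imgF h G)) = card (A - VV F) + card (B - VV (imgF h G))"
        unfolding e using AB by (intro card_Un_disjoint) auto
      also have "\<dots> = m - Suc t * card F + (n - Suc t * card G)"
        using s1 AB card_UN_pverts[OF t F] card_UN_pverts[OF t G'] cG
        by (simp add: card_Diff_subset finite_subset VV_def A_def B_def)
      finally have "mu t (m - Suc t * card F + (n - Suc t * card G)) = card (COV t (A \<union> B - VV F - VV (imgF h G)))"
        using mu_card[OF t, of "A \<union> B - VV F - VV (imgF h G)"] AB by simp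
      then show "\<psi> F (imgF h G) = (-1::real) ^ (card F + card G) * real (mu t (m - Suc t * card F + (n - Suc t * card G)))"
        by (simp add: \<psi>_def cG)
    qed
    finally show ?thesis by simp
  qed
  have "LH t (Hpoly t m * Hpoly t n) = (\<Sum>F\<in>DF t A. \<Sum>G\<in>DF t B. \<psi> F G)"
    unfolding LH_expand A_def by (intro sum.cong refl inner[unfolded A_def])
  also have "\<dots> = real (card {K \<in> COV t (A \<union> B). \<forall>P\<in>K. \<not> pverts P \<subseteq> A \<and> \<not> pverts P \<subseteq> B})"
    unfolding \<psi>_def by (rule main_identity[OF t AB])
  finally show ?thesis by (simp add: A_def B_def)
qed

end

lemma edg_endpoint:
  assumes "distinct (x # y # zs)"
  shows "{e \<in> edg (x # y # zs). x \<in> e} = {{x, y}}"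
proof -
  have "x \<notin> \<Union>(edg (y # zs))" using assms Union_edg_sub[of "y # zs"] by auto
  then show ?thesis by auto
qed

lemma edg_interior:
  "distinct ys \<Longrightarrow> x \<in> set ys \<Longrightarrow> x \<noteq> hd ys \<Longrightarrow> x \<noteq> last ys \<Longrightarrow>
   \<exists>e1 e2. e1 \<noteq> e2 \<and> e1 \<in> edg ys \<and> e2 \<in> edg ys \<and> x \<in> e1 \<and> x \<in> e2"
proof (induction ys rule: edg.induct)
  case (1 a b zs)
  show ?case
  proof (cases "x = b")
    case True
    then obtain c zs' where zs: "zs = c # zs'" using 1 by (cases zs) auto
    have "{a, b} \<noteq> {b, c}" using 1(2) zs by (auto simp: doubleton_eq_iff)
    then show ?thesis using True zs by (intro exI[of _ "{a,b}"] exI[of _ "{b,c}"]) auto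
  next
    case False
    then have "x \<in> set (b # zs)" "x \<noteq> last (b # zs)" using 1 by auto
    then obtain e1 e2 where "e1 \<noteq> e2 \<and> e1 \<in> edg (b # zs) \<and> e2 \<in> edg (b # zs) \<and> x \<in> e1 \<and> x \<in> e2"
      using 1 False by auto
    then show ?thesis by auto
  qed
qed auto

lemma edg_len: "edg xs \<noteq> {} \<Longrightarrow> length xs \<ge> 2"
  using edg_empty by force

lemma edg_unique_hd:
  "distinct xs \<Longrightarrow> distinct ys \<Longrightarrow> 2 \<le> length xs \<Longrightarrow> edg xs = edg ys \<Longrightarrow> hd ys = hd xs \<Longrightarrow> ys = xs"
proof (induction xs arbitrary: ys rule: edg.induct)
  case (1 x y zs)
  have "edg ys \<noteq> {}" using 1(5)[symmetric] by simp
  then have ly: "2 \<le> length ys" by (rule edg_len)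
  then obtain y' zs' where ys: "ys = x # y' # zs'" using 1(6)
    by (cases ys rule: edg.cases) auto
  have "{{x, y}} = {e \<in> edg ys. x \<in> e}" unfolding 1(5)[symmetric] by (rule edg_endpoint[OF 1(2), symmetric])
  also have "\<dots> = {{x, y'}}" using edg_endpoint[of x y' zs'] 1(3) ys by simp
  finally have "{{x, y}} = {{x, y'}}" .
  then have yy: "y' = y" using 1(2) by (auto simp: doubleton_eq_iff)
  have nx1: "{x, y} \<notin> edg (y # zs)" using 1(2) Union_edg_sub[of "y # zs"] by auto
  have nx2: "{x, y} \<notin> edg (y # zs')" using 1(3) ys yy Union_edg_sub[of "y # zs'"] by auto
  have ee: "edg (y # zs) = edg (y # zs')"
  proof -
    have "edg (y # zs) = edg (x # y # zs) - {{x, y}}" using nx1 by auto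
    also have "\<dots> = edg ys - {{x, y}}" using 1(5) by simp
    also have "\<dots> = edg (y # zs')" using nx2 ys yy by auto
    finally show ?thesis .
  qed
  show ?case
  proof (cases zs)
    case Nil
    then have "edg (y # zs') = {}" using ee by simp
    then have "zs' = []" using edg_nonempty[of "y # zs'"] by (cases zs') auto
    then show ?thesis using ys yy Nil by simp
  next
    case (Cons c cs)
    have "y # zs' = y # zs" using 1(1)[of "y # zs'"] 1(2,3) ys yy ee Cons by simp
    then show ?thesis using ys yy by simp
  qed
qed auto

lemma edg_unique:
  assumes xs: "distinct xs" "2 \<le> length xs" and ys: "distinct ys" and e: "edg xs = edg ys"
  shows "ys = xs \<or> ys = rev xs"
proof -
  obtain x y zs where xs': "xs = x # y # zs" using xs(2) by (cases xs rule: edg.cases) auto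
  have "edg ys \<noteq> {}" using e edg_nonempty[OF xs(2)] by simp
  then have ly: "2 \<le> length ys" by (rule edg_len)
  have sy: "set ys = set xs" using Union_edg[OF ly] Union_edg[OF xs(2)] e by simp
  have xin: "x \<in> set ys" using sy xs' by simp
  have ex: "{e \<in> edg ys. x \<in> e} = {{x, y}}" unfolding e[symmetric] xs' by (rule edg_endpoint) (use xs(1) xs' in simp)
  have nx: "\<not> (\<exists>e1 e2. e1 \<noteq> e2 \<and> e1 \<in> edg ys \<and> e2 \<in> edg ys \<and> x \<in> e1 \<and> x \<in> e2)"
  proof
    assume "\<exists>e1 e2. e1 \<noteq> e2 \<and> e1 \<in> edg ys \<and> e2 \<in> edg ys \<and> x \<in> e1 \<and> x \<in> e2"
    then obtain e1 e2 where "e1 \<noteq> e2" "e1 \<in> {e \<in> edg ys. x \<in> e}" "e2 \<in> {e \<in> edg ys. x \<in> e}" by blast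
    then show False unfolding ex by simp
  qed
  have "x = hd ys \<or> x = last ys"
  proof (rule ccontr)
    assume "\<not> (x = hd ys \<or> x = last ys)"
    then show False using edg_interior[OF ys xin] nx by simp
  qed
  then show ?thesis
  proof
    assume "x = hd ys"
    then have "ys = xs" using edg_unique_hd[OF xs(1) ys xs(2) e] xs' by simp
    then show ?thesis by simp
  next
    assume "x = last ys"
    then have "hd (rev ys) = hd xs" using xs' ly by (simp add: hd_rev)
    then have "rev ys = xs" using edg_unique_hd[OF xs(1) _ xs(2)] ys e edg_rev by simp
    then show ?thesis by auto
  qed
qed

lemma hd_ne_last: "distinct (xs :: nat list) \<Longrightarrow> 2 \<le> length xs \<Longrightarrow> hd xs \<noteq> last xs"
  by (cases xs rule: edg.cases) auto

context fixes t :: nat assumes t: "t \<ge> 1" begin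

lemma card_paths_V:
  assumes V: "card V = Suc t"
  shows "2 * card {P \<in> TP t. pverts P = V} = fact (Suc t)"
proof -
  have fin: "finite V" using V card.infinite by force
  define L where "L = {xs \<in> permutations_of_set V. hd xs < last xs}"
  have pl: "length xs = Suc t" "distinct xs" "set xs = V" if "xs \<in> permutations_of_set V" for xs
    using that V distinct_card[of xs] by (auto simp: permutations_of_set_def)
  have l2: "2 \<le> Suc t" using t by simp
  have split: "permutations_of_set V = L \<union> rev ` L"
  proof
    show "permutations_of_set V \<subseteq> L \<union> rev ` L"
    proof
      fix xs assume xs: "xs \<in> permutations_of_set V"
      have "hd xs \<noteq> last xs" using pl[OF xs] l2 by (intro hd_ne_last) auto
      moreover have "rev xs \<in> permutations_of_set V" using xs by (auto simp: permutations_of_set_def)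
      moreover have "hd (rev xs) = last xs" "last (rev xs) = hd xs"
        using pl[OF xs] by (auto simp: hd_rev last_rev)
      ultimately show "xs \<in> L \<union> rev ` L" using xs unfolding L_def
        by (metis (mono_tags, lifting) Un_iff image_eqI linorder_neqE mem_Collect_eq rev_rev_ident)
    qed
    show "L \<union> rev ` L \<subseteq> permutations_of_set V"
      unfolding L_def by (auto simp: permutations_of_set_def)
  qed
  have disj: "L \<inter> rev ` L = {}"
  proof (rule ccontr)
    assume "L \<inter> rev ` L \<noteq> {}"
    then obtain ys where ys: "ys \<in> L" "rev ys \<in> L" by auto
    have "ys \<noteq> []" using ys pl[of ys] unfolding L_def by auto
    then show False using ys unfolding L_def by (auto simp: hd_rev last_rev)
  qed
  have finL: "finite L" unfolding L_def by simp
  have "fact (Suc t) = card (permutations_of_set V)" using fin V by simp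
  also have "\<dots> = card L + card (rev ` L)" unfolding split using finL disj by (intro card_Un_disjoint) auto
  also have "card (rev ` L) = card L" by (rule card_image) (simp add: inj_on_def)
  finally have cL: "fact (Suc t) = 2 * card L" by simp
  have "bij_betw edg L {P \<in> TP t. pverts P = V}"
    unfolding bij_betw_def
  proof
    show "inj_on edg L"
    proof (rule inj_onI)
      fix xs ys assume xs: "xs \<in> L" and ys: "ys \<in> L" and e: "edg xs = edg ys"
      have x1: "distinct xs" "2 \<le> length xs" using pl xs l2 unfolding L_def by auto
      have y1: "distinct ys" using pl ys unfolding L_def by auto
      have "ys = xs \<or> ys = rev xs" by (rule edg_unique[OF x1 y1 e])
      moreover have "ys \<noteq> rev xs"
      proof
        assume "ys = rev xs"
        then show False using xs ys x1 unfolding L_def by (auto simp: hd_rev last_rev)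
      qed
      ultimately show "xs = ys" by simp
    qed
    show "edg ` L = {P \<in> TP t. pverts P = V}"
    proof
      show "edg ` L \<subseteq> {P \<in> TP t. pverts P = V}"
      proof
        fix P assume "P \<in> edg ` L"
        then obtain xs where xs: "xs \<in> L" "P = edg xs" by auto
        have p: "length xs = Suc t" "distinct xs" "set xs = V" using pl xs unfolding L_def by auto
        then have "pverts P = V" using xs Union_edg[of xs] l2 by (simp add: pverts_def)
        moreover have "P \<in> TP t" using p xs unfolding TP_def by auto
        ultimately show "P \<in> {P \<in> TP t. pverts P = V}" by simp
      qed
      show "{P \<in> TP t. pverts P = V} \<subseteq> edg ` L"
      proof
        fix P assume P: "P \<in> {P \<in> TP t. pverts P = V}"
        then obtain xs where xs: "P = edg xs" "distinct xs" "length xs = Suc t" "pverts P = set xs"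
          using TP_pverts[OF t] by blast
        have perm: "xs \<in> permutations_of_set V" "rev xs \<in> permutations_of_set V"
          using xs P by (auto simp: permutations_of_set_def)
        have "hd xs \<noteq> last xs" using xs l2 by (intro hd_ne_last) auto
        moreover have "xs \<noteq> []" using xs by auto
        ultimately have "xs \<in> L \<or> rev xs \<in> L" using perm unfolding L_def
          by (auto simp: hd_rev last_rev)
        then show "P \<in> edg ` L" using xs(1) edg_rev by (metis image_eqI)
      qed
    qed
  qed
  then have "card L = card {P \<in> TP t. pverts P = V}" by (rule bij_betw_same_card)
  then show ?thesis using cL by simp
qed

lemma card_Pb:
  assumes A: "finite A" and b: "b \<notin> A"
  shows "2 * card {P \<in> TP t. pverts P \<subseteq> insert b A \<and> b \<in> pverts P} = (card A choose t) * fact (Suc t)"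
proof -
  define SS where "SS = {S. S \<subseteq> A \<and> card S = t}"
  define T where "T S = {P \<in> TP t. pverts P = insert b S}" for S
  have eq: "{P \<in> TP t. pverts P \<subseteq> insert b A \<and> b \<in> pverts P} = (\<Union>S\<in>SS. T S)"
  proof
    show "{P \<in> TP t. pverts P \<subseteq> insert b A \<and> b \<in> pverts P} \<subseteq> (\<Union>S\<in>SS. T S)"
    proof
      fix P assume P: "P \<in> {P \<in> TP t. pverts P \<subseteq> insert b A \<and> b \<in> pverts P}"
      have c: "finite (pverts P)" "card (pverts P) = Suc t" using TP_card[OF t] P by auto
      have "pverts P - {b} \<in> SS" using P c unfolding SS_def by auto
      moreover have "P \<in> T (pverts P - {b})" using P unfolding T_def by auto
      ultimately show "P \<in> (\<Union>S\<in>SS. T S)" by blast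
    qed
    show "(\<Union>S\<in>SS. T S) \<subseteq> {P \<in> TP t. pverts P \<subseteq> insert b A \<and> b \<in> pverts P}"
      unfolding SS_def T_def by auto
  qed
  have finSS: "finite SS" unfolding SS_def using A by simp
  have finT: "finite (T S)" for S
  proof -
    have "T S \<subseteq> Pow (Pow (insert b S))" unfolding T_def pverts_def by auto
    moreover have "finite S" if ne: "T S \<noteq> {}"
    proof -
      obtain P where "P \<in> TP t" "pverts P = insert b S" using ne unfolding T_def by auto
      then show ?thesis using TP_card[OF t, of P] by simp
    qed
    ultimately show ?thesis by (metis finite_Pow_iff finite_insert finite_subset infinite_imp_nonempty)
  qed
  have "card (\<Union>S\<in>SS. T S) = (\<Sum>S\<in>SS. card (T S))"
  proof (rule card_UN_disjoint[OF finSS])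
    show "\<forall>S\<in>SS. finite (T S)" using finT by simp
    show "\<forall>S\<in>SS. \<forall>S'\<in>SS. S \<noteq> S' \<longrightarrow> T S \<inter> T S' = {}"
    proof (intro ballI impI)
      fix S S' assume "S \<in> SS" "S' \<in> SS" "S \<noteq> S'"
      then have "b \<notin> S" "b \<notin> S'" "S \<noteq> S'" using b unfolding SS_def by auto
      then have "insert b S \<noteq> insert b S'" by (metis Diff_insert_absorb)
      then show "T S \<inter> T S' = {}" unfolding T_def by auto
    qed
  qed
  then have "2 * card {P \<in> TP t. pverts P \<subseteq> insert b A \<and> b \<in> pverts P} = (\<Sum>S\<in>SS. 2 * card (T S))"
    by (simp add: eq sum_distrib_left)
  also have "\<dots> = (\<Sum>S\<in>SS. fact (Suc t))"
  proof (rule sum.cong[OF refl])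
    fix S assume "S \<in> SS"
    then have "finite S" "b \<notin> S" "card S = t" using b A unfolding SS_def by (auto simp: finite_subset)
    then have "card (insert b S) = Suc t" by simp
    then show "2 * card (T S) = fact (Suc t)" unfolding T_def by (rule card_paths_V)
  qed
  also have "\<dots> = (card A choose t) * fact (Suc t)" using n_subsets[OF A] by (simp add: SS_def)
  finally show ?thesis .
qed

end

definition NS :: "nat \<Rightarrow> nat set \<Rightarrow> nat set \<Rightarrow> nat set set set set" where
  "NS t A B = {K \<in> COV t (A \<union> B). \<forall>P\<in>K. \<not> pverts P \<subseteq> A \<and> \<not> pverts P \<subseteq> B}"
definition QS :: "nat \<Rightarrow> nat set \<Rightarrow> nat set \<Rightarrow> nat set set set set" where
  "QS t A B = {K \<in> COV t (A \<union> B). \<forall>P\<in>K. card (pverts P \<inter> B) = 1}"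

context fixes t :: nat assumes t: "t \<ge> 1" begin

lemma COV_fin: "K \<in> COV t V \<Longrightarrow> finite V \<Longrightarrow> finite K"
  using DF_fin_elem[OF t] by (auto simp: COV_def)

lemma NS_props:
  assumes AB: "A \<inter> B = {}" "finite A" "finite B" and K: "K \<in> NS t A B"
  shows "Suc t * card K = card A + card B" "card K \<le> card B"
proof -
  have K1: "K \<in> DF t (A \<union> B)" "VV K = A \<union> B" using K by (auto simp: NS_def COV_def VV_def)
  have "card (A \<union> B) = Suc t * card K"
    using card_UN_pverts[OF t K1(1)] K1(2) AB by (simp add: VV_def)
  then show "Suc t * card K = card A + card B" using AB by (simp add: card_Un_disjoint)
  define c where "c P = (SOME x. x \<in> pverts P \<inter> B)" for P
  have cin: "c P \<in> pverts P \<inter> B" if P: "P \<in> K" for P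
  proof -
    have "pverts P \<subseteq> A \<union> B" "\<not> pverts P \<subseteq> A" using K P by (auto simp: NS_def COV_def DF_def)
    then have "\<exists>x. x \<in> pverts P \<inter> B" by blast
    then show ?thesis unfolding c_def by (rule someI_ex)
  qed
  have "inj_on c K"
  proof (rule inj_onI)
    fix P Q assume P: "P \<in> K" and Q: "Q \<in> K" and e: "c P = c Q"
    have "pverts P \<inter> pverts Q \<noteq> {}" using cin[OF P] cin[OF Q] e by auto
    moreover have "pw K" using K by (auto simp: NS_def COV_def DF_def)
    ultimately show "P = Q" using pwD P Q by blast
  qed
  moreover have "c ` K \<subseteq> B" using cin by auto
  ultimately show "card K \<le> card B" using AB(3) by (rule card_inj_on_le)
qed

lemma NS_eq_QS:
  assumes AB: "A \<inter> B = {}" "finite A" "finite B" and c: "card A = t * card B"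
  shows "NS t A B = QS t A B"
proof
  show "NS t A B \<subseteq> QS t A B"
  proof
    fix K assume K: "K \<in> NS t A B"
    have "Suc t * card K = Suc t * card B" using NS_props(1)[OF AB K] c by simp
    then have cK: "card K = card B" by (simp only: mult_cancel1) simp
    have KC: "K \<in> COV t (A \<union> B)" using K by (simp add: NS_def)
    have finK: "finite K" using COV_fin[OF KC] AB by simp
    have K1: "pw K" "VV K = A \<union> B" "\<And>P. P \<in> K \<Longrightarrow> pverts P \<subseteq> A \<union> B" "\<And>P. P \<in> K \<Longrightarrow> \<not> pverts P \<subseteq> A"
      using K by (auto simp: NS_def COV_def DF_def VV_def)
    have ge: "1 \<le> card (pverts P \<inter> B)" if P: "P \<in> K" for P
    proof -
      have "pverts P \<inter> B \<noteq> {}" using K1(3,4)[OF P] by blast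
      then show ?thesis using AB(3) by (simp add: Suc_le_eq card_gt_0_iff)
    qed
    have "(\<Union>P\<in>K. pverts P \<inter> B) = B" using K1(2) unfolding VV_def by blast
    moreover have "card (\<Union>P\<in>K. pverts P \<inter> B) = (\<Sum>P\<in>K. card (pverts P \<inter> B))"
    proof (rule card_UN_disjoint[OF finK])
      show "\<forall>P\<in>K. finite (pverts P \<inter> B)" using AB(3) by simp
      show "\<forall>P\<in>K. \<forall>Q\<in>K. P \<noteq> Q \<longrightarrow> pverts P \<inter> B \<inter> (pverts Q \<inter> B) = {}"
        using pwD[OF K1(1)] by blast
    qed
    ultimately have "card B = (\<Sum>P\<in>K. card (pverts P \<inter> B))" by simp
    then have "(\<Sum>P\<in>K. card (pverts P \<inter> B) - 1) = 0"
      using cK ge by (simp add: sum_subtractf_nat)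
    then have "\<forall>P\<in>K. card (pverts P \<inter> B) - 1 = 0" using finK by simp
    then show "K \<in> QS t A B" using KC ge unfolding QS_def by (simp add: le_antisym)
  qed
  show "QS t A B \<subseteq> NS t A B"
  proof
    fix K assume K: "K \<in> QS t A B"
    have "\<not> pverts P \<subseteq> A \<and> \<not> pverts P \<subseteq> B" if P: "P \<in> K" for P
    proof
      have c1: "card (pverts P \<inter> B) = 1" using K P by (auto simp: QS_def)
      then have "pverts P \<inter> B \<noteq> {}" by auto
      then show "\<not> pverts P \<subseteq> A" using AB(1) by blast
      have "P \<in> TP t" using K P by (auto simp: QS_def COV_def DF_def)
      then have "card (pverts P) = Suc t" using TP_card[OF t] by blast
      moreover have "pverts P \<subseteq> B \<Longrightarrow> pverts P \<inter> B = pverts P" by blast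
      ultimately show "\<not> pverts P \<subseteq> B" using c1 t by auto
    qed
    then show "K \<in> NS t A B" using K by (auto simp: QS_def NS_def)
  qed
qed

end

context fixes t :: nat assumes t: "t \<ge> 1" begin

lemma COV_empty: "COV t {} = {{}}"
proof
  show "COV t {} \<subseteq> {{}}"
  proof
    fix K assume K: "K \<in> COV t {}"
    have "P \<notin> K" for P
    proof
      assume P: "P \<in> K"
      then have "P \<in> TP t" "pverts P \<subseteq> {}" using K by (auto simp: COV_def DF_def)
      then show False using TP_ne[OF t] by blast
    qed
    then show "K \<in> {{}}" by auto
  qed
  show "{{}} \<subseteq> COV t {}" by (auto simp: COV_def DF_def pw_def)
qed

lemma QS_step:
  assumes AB: "A \<inter> B = {}" "finite A" "finite B" and b: "b \<in> B"
    and P: "P \<in> TP t" "pverts P \<subseteq> insert b A" "b \<in> pverts P"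
  shows "card {K \<in> QS t A B. P \<in> K} = card (QS t (A - pverts P) (B - {b}))"
proof -
  define A' where "A' = A - pverts P"
  define B' where "B' = B - {b}"
  have bA: "b \<notin> A" using AB b by blast
  have PB: "pverts P \<inter> B = {b}" using P AB b by blast
  have PA'B': "pverts P \<inter> (A' \<union> B') = {}" using PB unfolding A'_def B'_def by blast
  have ne: "pverts P \<noteq> {}" using P by blast
  have U: "A' \<union> B' = (A \<union> B) - pverts P" using PB unfolding A'_def B'_def by blast
  have U2: "A \<union> B = pverts P \<union> (A' \<union> B')" using U P b by blast
  show ?thesis unfolding A'_def[symmetric] B'_def[symmetric]
  proof (rule bij_betw_same_card[OF bij_betw_byWitness[where f = "\<lambda>K. K - {P}" and f' = "insert P"]])
    show "\<forall>K\<in>{K \<in> QS t A B. P \<in> K}. insert P (K - {P}) = K" by auto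
    have notin: "P \<notin> K" if K: "K \<in> QS t A' B'" for K
    proof
      assume "P \<in> K"
      then have "pverts P \<subseteq> A' \<union> B'" using K by (auto simp: QS_def COV_def DF_def)
      then show False using PA'B' ne by blast
    qed
    then show "\<forall>K\<in>QS t A' B'. (insert P K) - {P} = K" by auto
    show "(\<lambda>K. K - {P}) ` {K \<in> QS t A B. P \<in> K} \<subseteq> QS t A' B'"
    proof
      fix K' assume "K' \<in> (\<lambda>K. K - {P}) ` {K \<in> QS t A B. P \<in> K}"
      then obtain K where K: "K \<in> QS t A B" "P \<in> K" "K' = K - {P}" by auto
      have K1: "K \<subseteq> TP t" "pw K" "VV K = A \<union> B" "\<And>Q. Q \<in> K \<Longrightarrow> pverts Q \<subseteq> A \<union> B"
        "\<And>Q. Q \<in> K \<Longrightarrow> card (pverts Q \<inter> B) = 1"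
        using K by (auto simp: QS_def COV_def DF_def VV_def)
      have dj: "pverts Q \<inter> pverts P = {}" if "Q \<in> K'" for Q
        using pwD[OF K1(2)] K that by blast
      have sub: "pverts Q \<subseteq> A' \<union> B'" if "Q \<in> K'" for Q
        using dj[OF that] K1(4)[of Q] that K U by blast
      have c1: "card (pverts Q \<inter> B') = 1" if "Q \<in> K'" for Q
      proof -
        have "pverts Q \<inter> B' = pverts Q \<inter> B" using dj[OF that] P(3) unfolding B'_def by blast
        then show ?thesis using K1(5)[of Q] that K by simp
      qed
      have "VV K' = A' \<union> B'"
      proof
        show "VV K' \<subseteq> A' \<union> B'" using sub unfolding VV_def by blast
        show "A' \<union> B' \<subseteq> VV K'"
        proof
          fix x assume x: "x \<in> A' \<union> B'"
          then have "x \<in> VV K" "x \<notin> pverts P" using K1(3) U by auto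
          then obtain Q where "Q \<in> K" "x \<in> pverts Q" "Q \<noteq> P" unfolding VV_def by blast
          then show "x \<in> VV K'" using K(3) unfolding VV_def by blast
        qed
      qed
      moreover have "K' \<subseteq> TP t" using K1(1) K(3) by blast
      moreover have "pw K'" using pw_subset[OF K1(2)] K(3) by blast
      ultimately show "K' \<in> QS t A' B'" using sub c1
        unfolding QS_def COV_def DF_def VV_def[symmetric] by simp
    qed
    show "insert P ` QS t A' B' \<subseteq> {K \<in> QS t A B. P \<in> K}"
    proof
      fix K assume "K \<in> insert P ` QS t A' B'"
      then obtain K' where K': "K' \<in> QS t A' B'" "K = insert P K'" by auto
      have K1: "K' \<subseteq> TP t" "pw K'" "VV K' = A' \<union> B'" "\<And>Q. Q \<in> K' \<Longrightarrow> pverts Q \<subseteq> A' \<union> B'"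
        "\<And>Q. Q \<in> K' \<Longrightarrow> card (pverts Q \<inter> B') = 1"
        using K' by (auto simp: QS_def COV_def DF_def VV_def)
      have dj: "pverts Q \<inter> pverts P = {}" if "Q \<in> K'" for Q
        using K1(4)[OF that] PA'B' by blast
      have pwK: "pw K" unfolding pw_def
      proof (intro ballI impI)
        fix Q R assume Q: "Q \<in> K" and R: "R \<in> K" and QR: "Q \<noteq> R"
        show "pverts Q \<inter> pverts R = {}"
        proof (cases "Q = P")
          case True then show ?thesis using R QR K' dj by blast
        next
          case False
          show ?thesis
          proof (cases "R = P")
            case True then show ?thesis using Q False K' dj by blast
          next
            case False2: False
            then show ?thesis using Q R QR False K' pwD[OF K1(2)] by blast
          qed
        qed
      qed
      have c1: "card (pverts Q \<inter> B) = 1" if "Q \<in> K" for Q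
      proof (cases "Q = P")
        case True then show ?thesis using PB by simp
      next
        case False
        then have Q: "Q \<in> K'" using that K' by blast
        have "pverts Q \<inter> B = pverts Q \<inter> B'" using dj[OF Q] P(3) unfolding B'_def by blast
        then show ?thesis using K1(5)[OF Q] by simp
      qed
      have sub: "pverts Q \<subseteq> A \<union> B" if "Q \<in> K" for Q
        using that K' K1(4) U2 by blast
      have "VV K = A \<union> B" using K1(3) K' U2 unfolding VV_def by auto
      moreover have "K \<subseteq> TP t" using K1(1) K' P(1) by blast
      ultimately show "K \<in> {K \<in> QS t A B. P \<in> K}" using pwK c1 sub K'
        unfolding QS_def COV_def DF_def VV_def[symmetric] by simp
    qed
  qed
qed

end

context fixes t :: nat assumes t: "t \<ge> 1" begin

lemma arith_step:
  fixes k p :: nat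
  assumes p: "2 * p = ((t * k + t) choose t) * fact (Suc t)"
  shows "real p * (((real t + 1) / 2) ^ k * fact (t * k)) = ((real t + 1) / 2) ^ Suc k * fact (t * Suc k)"
proof -
  have bf: "fact t * fact (t * k) * ((t * k + t) choose t) = (fact (t * k + t) :: nat)"
    using binomial_fact_lemma[of t "t * k + t"] by simp
  define C where "C = real ((t * k + t) choose t)"
  have hp: "real p = C * fact (Suc t) / 2"
    using arg_cong[OF p, of real] unfolding C_def by (simp add: field_simps)
  have fs: "(fact (Suc t) :: real) = (real t + 1) * fact t" by (simp add: fact_Suc)
  have "real p * fact (t * k) = (real t + 1) / 2 * (fact t * fact (t * k) * C)"
    unfolding hp fs by (simp add: field_simps)
  also have "fact t * fact (t * k) * C = fact (t * k + t)"
    using arg_cong[OF bf, of real] unfolding C_def by simp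
  finally have e: "real p * fact (t * k) = (real t + 1) / 2 * fact (t * Suc k)"
    by (simp add: algebra_simps)
  define c where "c = (real t + 1) / 2"
  have "real p * (c ^ k * fact (t * k)) = c ^ k * (real p * fact (t * k))" by (simp only: ac_simps)
  also have "\<dots> = c ^ Suc k * fact (t * Suc k)" unfolding e c_def[symmetric] by simp
  finally show ?thesis unfolding c_def .
qed

lemma QS_count:
  "finite A \<Longrightarrow> finite B \<Longrightarrow> A \<inter> B = {} \<Longrightarrow> card A = t * card B \<Longrightarrow>
   real (card (QS t A B)) = ((real t + 1) / 2) ^ card B * fact (t * card B)"
proof (induction "card B" arbitrary: A B)
  case 0
  then have "B = {}" "A = {}" by auto
  then have "QS t A B = {{}}" using COV_empty[OF t] by (auto simp: QS_def)
  then show ?case using 0 by simp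
next
  case (Suc k)
  note AB = Suc.prems(1-3)
  obtain b where b: "b \<in> B" using Suc.hyps(2) by (metis card.empty empty_iff equals0I nat.distinct(1))
  define B' where "B' = B - {b}"
  have cB': "card B' = k" using Suc.hyps(2) b AB unfolding B'_def by simp
  have bA: "b \<notin> A" using AB b by blast
  define Pb where "Pb = {P \<in> TP t. pverts P \<subseteq> insert b A \<and> b \<in> pverts P}"
  have finPb: "finite Pb"
  proof -
    have "Pb \<subseteq> Pow (Pow (insert b A))" unfolding Pb_def pverts_def by auto
    then show ?thesis using AB by (meson finite_Pow_iff finite_insert finite_subset)
  qed
  have finQ: "finite (QS t A B)"
    using finite_COV[OF t, of "A \<union> B"] AB by (auto simp: QS_def)
  have part: "QS t A B = (\<Union>P\<in>Pb. {K \<in> QS t A B. P \<in> K})"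
  proof
    show "QS t A B \<subseteq> (\<Union>P\<in>Pb. {K \<in> QS t A B. P \<in> K})"
    proof
      fix K assume K: "K \<in> QS t A B"
      have K1: "K \<subseteq> TP t" "VV K = A \<union> B" "\<And>Q. Q \<in> K \<Longrightarrow> pverts Q \<subseteq> A \<union> B"
        "\<And>Q. Q \<in> K \<Longrightarrow> card (pverts Q \<inter> B) = 1"
        using K by (auto simp: QS_def COV_def DF_def VV_def)
      have "b \<in> VV K" using K1(2) b by simp
      then obtain P where P: "P \<in> K" "b \<in> pverts P" unfolding VV_def by blast
      have "pverts P \<inter> B = {b}"
        using K1(4)[OF P(1)] P(2) b by (metis IntI card_1_singletonE singletonD)
      then have "pverts P \<subseteq> insert b A" using K1(3)[OF P(1)] by blast
      then have "P \<in> Pb" unfolding Pb_def using P K1(1) by blast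
      then show "K \<in> (\<Union>P\<in>Pb. {K \<in> QS t A B. P \<in> K})" using K P by blast
    qed
  qed auto
  have "card (QS t A B) = (\<Sum>P\<in>Pb. card {K \<in> QS t A B. P \<in> K})"
  proof (subst part, rule card_UN_disjoint[OF finPb])
    show "\<forall>P\<in>Pb. finite {K \<in> QS t A B. P \<in> K}" using finQ by simp
    show "\<forall>P\<in>Pb. \<forall>Q\<in>Pb. P \<noteq> Q \<longrightarrow> {K \<in> QS t A B. P \<in> K} \<inter> {K \<in> QS t A B. Q \<in> K} = {}"
    proof (intro ballI impI)
      fix P Q assume P: "P \<in> Pb" and Q: "Q \<in> Pb" and PQ: "P \<noteq> Q"
      show "{K \<in> QS t A B. P \<in> K} \<inter> {K \<in> QS t A B. Q \<in> K} = {}"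
      proof (rule ccontr)
        assume "{K \<in> QS t A B. P \<in> K} \<inter> {K \<in> QS t A B. Q \<in> K} \<noteq> {}"
        then obtain K where K: "K \<in> QS t A B" "P \<in> K" "Q \<in> K" by blast
        have "pw K" using K by (auto simp: QS_def COV_def DF_def)
        then have "pverts P \<inter> pverts Q = {}" using pwD K PQ by blast
        then show False using P Q unfolding Pb_def by blast
      qed
    qed
  qed
  then have "real (card (QS t A B)) = (\<Sum>P\<in>Pb. real (card (QS t (A - pverts P) B')))"
    using QS_step[OF t AB(3) AB(1) AB(2) b] unfolding Pb_def B'_def by (simp add: of_nat_sum)
  also have "\<dots> = (\<Sum>P\<in>Pb. ((real t + 1) / 2) ^ k * fact (t * k))"
  proof (rule sum.cong[OF refl])
    fix P assume P: "P \<in> Pb"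
    have cP: "card (pverts P) = Suc t" "finite (pverts P)" using P TP_card[OF t] unfolding Pb_def by auto
    have "A \<inter> pverts P = pverts P - {b}" using P bA unfolding Pb_def by blast
    then have "card (A \<inter> pverts P) = t" using cP P unfolding Pb_def by simp
    then have "card (A - pverts P) = t * k"
      using Suc.prems(4) Suc.hyps(2)[symmetric] AB card_Diff_subset_Int[of A "pverts P"] cP
      by simp
    moreover have "finite (A - pverts P)" "finite B'" "(A - pverts P) \<inter> B' = {}"
      using AB unfolding B'_def by auto
    ultimately show "real (card (QS t (A - pverts P) B')) = ((real t + 1) / 2) ^ k * fact (t * k)"
      using Suc.hyps(1)[of B' "A - pverts P"] cB' by simp
  qed
  also have "\<dots> = real (card Pb) * (((real t + 1) / 2) ^ k * fact (t * k))" by simp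
  also have "\<dots> = ((real t + 1) / 2) ^ Suc k * fact (t * Suc k)"
  proof (rule arith_step)
    have "card A = t * k + t" using Suc.prems(4) Suc.hyps(2)[symmetric] by simp
    then show "2 * card Pb = ((t * k + t) choose t) * fact (Suc t)"
      using card_Pb[OF t AB(1) bA] unfolding Pb_def by simp
  qed
  finally show ?case using Suc.hyps(2) by simp
qed

end

theorem mainTheorem13:
  fixes t n :: nat
  assumes "t \<ge> 1"
  shows "(\<forall>m. m > n * t \<longrightarrow> LH t (Hpoly t m * Hpoly t n) = 0)
       \<and> LH t (Hpoly t (n * t) * Hpoly t n) = ((real t + 1) / 2) ^ n * fact (n * t)"
proof -
  have t: "t \<ge> 1" by fact
  have AB: "finite {0..<m}" "finite {m..<m+n}" "{0..<m} \<inter> {m..<m+n} = {}" for m :: nat by auto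
  have LHm: "LH t (Hpoly t m * Hpoly t n) = real (card (NS t {0..<m} {m..<m+n}))" for m
    unfolding LH_comb[OF t] NS_def ..
  have P1: "LH t (Hpoly t m * Hpoly t n) = 0" if m: "m > n * t" for m
  proof -
    have "NS t {0..<m} {m..<m+n} = {}"
    proof (rule ccontr)
      assume "NS t {0..<m} {m..<m+n} \<noteq> {}"
      then obtain K where K: "K \<in> NS t {0..<m} {m..<m+n}" by blast
      have "Suc t * card K = m + n" "card K \<le> n"
        using NS_props[OF t AB(3) AB(1) AB(2) K] by auto
      then have "m + n \<le> Suc t * n" by (metis mult_le_mono2)
      then show False using m by (simp add: algebra_simps)
    qed
    then show ?thesis unfolding LHm by simp
  qed
  have "NS t {0..<n * t} {n * t..<n * t + n} = QS t {0..<n * t} {n * t..<n * t + n}"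
    using NS_eq_QS[OF t AB(3) AB(1) AB(2)] by (simp add: mult.commute)
  then have "LH t (Hpoly t (n * t) * Hpoly t n) = real (card (QS t {0..<n * t} {n * t..<n * t + n}))"
    unfolding LHm by simp
  also have "\<dots> = ((real t + 1) / 2) ^ n * fact (t * n)"
    using QS_count[OF t AB(1) AB(2) AB(3)] by (simp add: mult.commute)
  finally show ?thesis using P1 by (simp add: mult.commute)
qed

end
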